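(* For any inclusion $\mathcal X_0\subset\mathcal X$ of finite-dimensional operator systems and every $n\in\mathbb N$, $$\mathrm{Ind}_{\mathrm{CP}}(M_n(\mathcal X):M_n(\mathcal X_0))=\mathrm{Ind}_{\mathrm{CP}}(\mathcal X:\mathcal X_0).$$
   Context: For an operator system $\mathcal X$ with unit $1$, $\mathrm{CP}(\mathcal X)$ denotes the completely positive maps $\mathcal X\to\mathcal X$ and $\mathrm{CP}_1(\mathcal X)$ the set of $\varphi\in\mathrm{CP}(\mathcal X)$ with $\varphi(\mathbb C1)\subset\mathbb C1$. For an operator subsystem $\mathcal X_0\subset\mathcal X$, $\mathrm{Ind}_{\mathrm{CP}}(\mathcal X:\mathcal X_0)=\inf\{\|\varphi(1)\|:\varphi\in\mathrm{CP}_1(\mathcal X),\ \varphi(\mathcal X)\subset\mathcal X_0,\ \varphi-\mathrm{id}_{\mathcal X}\in\mathrm{CP}(\mathcal X)\}$ ($\infty$ if empty). $M_n(\mathcal X)$ carries its natural operator system structure (equal to $M_n\otimes_{\min}\mathcal X$), with $M_n(\mathcal X_0)$ a subsystem. *)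

theory Defs
  imports "HOL-Analysis.Analysis" "HOL-Library.Function_Algebras"
begin

class cvec = ab_group_add +
  fixes scaleC :: "complex \<Rightarrow> 'a \<Rightarrow> 'a" (infixr "*\<^sub>C" 75)
  assumes scaleC_add_right: "a *\<^sub>C (x + y) = a *\<^sub>C x + a *\<^sub>C y"
    and scaleC_add_left: "(a + b) *\<^sub>C x = a *\<^sub>C x + b *\<^sub>C x"
    and scaleC_scaleC: "a *\<^sub>C (b *\<^sub>C x) = (a * b) *\<^sub>C x"
    and scaleC_one: "1 *\<^sub>C x = x"

instantiation "fun" :: (type, cvec) cvec
begin
definition scaleC_fun :: "complex \<Rightarrow> ('a \<Rightarrow> 'b) \<Rightarrow> 'a \<Rightarrow> 'b"
  where "scaleC_fun c f = (\<lambda>x. c *\<^sub>C f x)"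
instance
  by standard (auto simp: scaleC_fun_def fun_eq_iff scaleC_add_right scaleC_add_left
      scaleC_scaleC scaleC_one)
end

definition csubspace :: "'a::cvec set \<Rightarrow> bool" where
  "csubspace V \<longleftrightarrow> 0 \<in> V \<and> (\<forall>x\<in>V. \<forall>y\<in>V. x + y \<in> V) \<and> (\<forall>c. \<forall>x\<in>V. c *\<^sub>C x \<in> V)"

definition cspan :: "'a::cvec set \<Rightarrow> 'a set" where
  "cspan S = {x. \<exists>T c. finite T \<and> T \<subseteq> S \<and> x = (\<Sum>t\<in>T. c t *\<^sub>C t)}"

definition fin_dim :: "'a::cvec set \<Rightarrow> bool" where
  "fin_dim V \<longleftrightarrow> (\<exists>S. finite S \<and> S \<subseteq> V \<and> V = cspan S)"

text \<open>Matrices over a set V are functions nat => nat => 'a; an n x n matrix is one vanishing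
  outside the index box {0..<n} x {0..<n}.\<close>

record 'a opsys =
  carrier :: "'a set"
  star :: "'a \<Rightarrow> 'a"
  unit :: 'a
  cone :: "nat \<Rightarrow> (nat \<Rightarrow> nat \<Rightarrow> 'a) set"

definition mat_in :: "nat \<Rightarrow> 'a::zero set \<Rightarrow> (nat \<Rightarrow> nat \<Rightarrow> 'a) \<Rightarrow> bool" where
  "mat_in n V A \<longleftrightarrow> (\<forall>i j. (i < n \<and> j < n \<longrightarrow> A i j \<in> V) \<and> (\<not> (i < n \<and> j < n) \<longrightarrow> A i j = 0))"

definition Mat :: "nat \<Rightarrow> 'a::zero set \<Rightarrow> (nat \<Rightarrow> nat \<Rightarrow> 'a) set" where
  "Mat n V = {A. mat_in n V A}"

definition mat_star :: "('a \<Rightarrow> 'a) \<Rightarrow> (nat \<Rightarrow> nat \<Rightarrow> 'a) \<Rightarrow> (nat \<Rightarrow> nat \<Rightarrow> 'a)" where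
  "mat_star s A = (\<lambda>i j. s (A j i))"

definition hermitian :: "('a \<Rightarrow> 'a) \<Rightarrow> (nat \<Rightarrow> nat \<Rightarrow> 'a) \<Rightarrow> bool" where
  "hermitian s A \<longleftrightarrow> mat_star s A = A"

definition diag_unit :: "nat \<Rightarrow> 'a::zero \<Rightarrow> (nat \<Rightarrow> nat \<Rightarrow> 'a)" where
  "diag_unit n e = (\<lambda>i j. if i = j \<and> i < n then e else 0)"

definition conj_by :: "nat \<Rightarrow> nat \<Rightarrow> (nat \<Rightarrow> nat \<Rightarrow> complex) \<Rightarrow> (nat \<Rightarrow> nat \<Rightarrow> 'a::cvec)
    \<Rightarrow> (nat \<Rightarrow> nat \<Rightarrow> 'a)" where
  "conj_by n m \<alpha> A = (\<lambda>k l. if k < m \<and> l < m then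
      (\<Sum>i<n. \<Sum>j<n. (cnj (\<alpha> i k) * \<alpha> j l) *\<^sub>C A i j) else 0)"

definition operator_system :: "'a::cvec opsys \<Rightarrow> bool" where
  "operator_system X \<longleftrightarrow>
     csubspace (carrier X) \<and>
     (\<forall>x\<in>carrier X. star X x \<in> carrier X \<and> star X (star X x) = x) \<and>
     (\<forall>x\<in>carrier X. \<forall>y\<in>carrier X. star X (x + y) = star X x + star X y) \<and>
     (\<forall>c. \<forall>x\<in>carrier X. star X (c *\<^sub>C x) = cnj c *\<^sub>C star X x) \<and>
     unit X \<in> carrier X \<and> star X (unit X) = unit X \<and>
     (\<forall>n. cone X n \<subseteq> {A \<in> Mat n (carrier X). hermitian (star X) A}) \<and>
     (\<forall>n. \<forall>A\<in>cone X n. \<forall>B\<in>cone X n. A + B \<in> cone X n) \<and>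
     (\<forall>n. \<forall>A\<in>cone X n. \<forall>r::real. r \<ge> 0 \<longrightarrow> complex_of_real r *\<^sub>C A \<in> cone X n) \<and>
     (\<forall>n. \<forall>A\<in>cone X n. - A \<in> cone X n \<longrightarrow> A = 0) \<and>
     (\<forall>n m \<alpha>. \<forall>A\<in>cone X n. conj_by n m \<alpha> A \<in> cone X m) \<and>
     (\<forall>n. \<forall>A\<in>Mat n (carrier X). hermitian (star X) A \<longrightarrow>
        (\<exists>r::real. r > 0 \<and> complex_of_real r *\<^sub>C diag_unit n (unit X) + A \<in> cone X n)) \<and>
     (\<forall>n. \<forall>A\<in>Mat n (carrier X). hermitian (star X) A \<longrightarrow>
        (\<forall>r::real. r > 0 \<longrightarrow> complex_of_real r *\<^sub>C diag_unit n (unit X) + A \<in> cone X n)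
        \<longrightarrow> A \<in> cone X n)"

definition fd_operator_system :: "'a::cvec opsys \<Rightarrow> bool" where
  "fd_operator_system X \<longleftrightarrow> operator_system X \<and> fin_dim (carrier X)"

definition subsystem :: "'a::cvec opsys \<Rightarrow> 'a opsys \<Rightarrow> bool" where
  "subsystem X0 X \<longleftrightarrow> operator_system X \<and>
     csubspace (carrier X0) \<and> carrier X0 \<subseteq> carrier X \<and>
     unit X0 = unit X \<and> star X0 = star X \<and>
     (\<forall>x\<in>carrier X0. star X x \<in> carrier X0) \<and>
     (\<forall>n. cone X0 n = cone X n \<inter> Mat n (carrier X0))"

text \<open>Matrix levels M_n(X): M_m(M_n(X)) is identified with M_{mn}(X).\<close>
definition flatten :: "nat \<Rightarrow> (nat \<Rightarrow> nat \<Rightarrow> (nat \<Rightarrow> nat \<Rightarrow> 'a)) \<Rightarrow> (nat \<Rightarrow> nat \<Rightarrow> 'a)" where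
  "flatten n B = (\<lambda>p q. B (p div n) (q div n) (p mod n) (q mod n))"

definition Mn_sys :: "nat \<Rightarrow> 'a::cvec opsys \<Rightarrow> (nat \<Rightarrow> nat \<Rightarrow> 'a) opsys" where
  "Mn_sys n X = \<lparr> carrier = Mat n (carrier X),
                  star = mat_star (star X),
                  unit = diag_unit n (unit X),
                  cone = (\<lambda>m. {B \<in> Mat m (Mat n (carrier X)). flatten n B \<in> cone X (m * n)}) \<rparr>"

definition clinear_on :: "'a::cvec set \<Rightarrow> ('a \<Rightarrow> 'a) \<Rightarrow> bool" where
  "clinear_on V f \<longleftrightarrow> (\<forall>x\<in>V. \<forall>y\<in>V. f (x + y) = f x + f y) \<and> (\<forall>c. \<forall>x\<in>V. f (c *\<^sub>C x) = c *\<^sub>C f x)"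

definition CP :: "'a::cvec opsys \<Rightarrow> ('a \<Rightarrow> 'a) set" where
  "CP X = {\<phi>. clinear_on (carrier X) \<phi> \<and> \<phi> ` carrier X \<subseteq> carrier X \<and>
             (\<forall>n. \<forall>A\<in>cone X n. (\<lambda>i j. \<phi> (A i j)) \<in> cone X n)}"

definition CP1 :: "'a::cvec opsys \<Rightarrow> ('a \<Rightarrow> 'a) set" where
  "CP1 X = {\<phi> \<in> CP X. \<forall>c. \<exists>d. \<phi> (c *\<^sub>C unit X) = d *\<^sub>C unit X}"

definition osnorm :: "'a::cvec opsys \<Rightarrow> 'a \<Rightarrow> real" where
  "osnorm X x = Inf {r::real. r \<ge> 0 \<and>
      (\<lambda>i j. if i = 0 \<and> j = 0 then complex_of_real r *\<^sub>C unit X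
             else if i = 0 \<and> j = 1 then x
             else if i = 1 \<and> j = 0 then star X x
             else if i = 1 \<and> j = 1 then complex_of_real r *\<^sub>C unit X
             else 0) \<in> cone X 2}"

definition Ind_CP :: "'a::cvec opsys \<Rightarrow> 'a opsys \<Rightarrow> ereal" where
  "Ind_CP X X0 = Inf {ereal (osnorm X (\<phi> (unit X))) | \<phi>.
      \<phi> \<in> CP1 X \<and> \<phi> ` carrier X \<subseteq> carrier X0 \<and> (\<lambda>x. \<phi> x - x) \<in> CP X}"

end

theory Submission
  imports Defs
begin

lemma scaleC_zero_left[simp]: "0 *\<^sub>C (x::'a::cvec) = 0"
  by (metis add_cancel_right_right add_0 scaleC_add_left)
lemma scaleC_zero_right[simp]: "c *\<^sub>C (0::'a::cvec) = 0"
  by (metis add_cancel_right_right add_0 scaleC_add_right)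
lemma scaleC_fun_apply[simp]: "(c *\<^sub>C f) x = c *\<^sub>C f x"
  by (simp add: scaleC_fun_def)
lemma sum_delta1: "(\<Sum>j<(N::nat). if j = b then (F::nat\<Rightarrow>'a::comm_monoid_add) j else 0) = (if b < N then F b else 0)"
  by (subst sum.delta) auto
declare scaleC_one[simp]
lemma scaleC_ind[simp]: "(if b then 1 else 0) *\<^sub>C (x::'a::cvec) = (if b then x else 0)"
  by (simp add: scaleC_one)
lemma sum_fun_apply: "finite S \<Longrightarrow> sum f S x = (\<Sum>k\<in>S. f k x)"
  by (induction S rule: finite_induct) auto

lemma sum_delta2': "(\<Sum>i<(N::nat). \<Sum>j<N. if i = a \<and> j = b then (F i j ::'a::comm_monoid_add) else 0)
   = (if a < N \<and> b < N then F a b else 0)"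
proof -
  have "(\<Sum>i<(N::nat). \<Sum>j<N. if i = a \<and> j = b then (F i j ::'a::comm_monoid_add) else 0)
      = (\<Sum>i<N. if i = a then (\<Sum>j<N. if j = b then F a j else 0) else 0)"
    by (rule sum.cong) auto
  also have "\<dots> = (\<Sum>i<N. if i = a then (if b < N then F a b else 0) else 0)"
    by (simp only: sum_delta1)
  also have "\<dots> = (if a < N \<and> b < N then F a b else 0)"
    by (subst sum_delta1) auto
  finally show ?thesis .
qed

lemma sum_delta2: "(\<Sum>i<(N::nat). \<Sum>j<N. (if i = a \<and> j = b then 1 else 0) *\<^sub>C (F i j::'a::cvec))
   = (if a < N \<and> b < N then F a b else 0)"
  unfolding scaleC_ind by (rule sum_delta2')

lemma cnj_ind: "cnj (if b then 1 else 0) * (if c then 1 else 0) = (if b \<and> c then 1 else (0::complex))"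
  by auto

lemma conj_compress:
  assumes "\<forall>k<m. g k < N"
  shows "conj_by N m (\<lambda>p i. if p = g i then 1 else 0) (F::nat\<Rightarrow>nat\<Rightarrow>'a::cvec)
     = (\<lambda>k l. if k<m \<and> l<m then F (g k) (g l) else 0)"
proof (intro ext)
  fix k l
  show "conj_by N m (\<lambda>p i. if p = g i then 1 else 0) F k l = (if k<m \<and> l<m then F (g k) (g l) else 0)"
  proof (cases "k<m \<and> l<m")
    case True
    have "conj_by N m (\<lambda>p i. if p = g i then 1 else 0) F k l
      = (\<Sum>i<N. \<Sum>j<N. (if i = g k \<and> j = g l then 1 else 0) *\<^sub>C F i j)"
      unfolding conj_by_def using True by (simp add: cnj_ind)
    then show ?thesis using True assms sum_delta2'[where N=N and a="g k" and b="g l" and F=F] by simp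
  qed (auto simp: conj_by_def)
qed

lemma conj_amp:
  assumes "0 < n" "p < m*n" "q < m*n"
  shows "conj_by m (m*n) (\<lambda>i p. if i = p div n \<and> p mod n = k then 1 else 0) (P::nat\<Rightarrow>nat\<Rightarrow>'a::cvec) p q
     = (if p mod n = k \<and> q mod n = k then P (p div n) (q div n) else 0)"
proof -
  have a: "p div n < m" "q div n < m" using assms
    by (simp_all add: less_mult_imp_div_less)
  have "conj_by m (m*n) (\<lambda>i p. if i = p div n \<and> p mod n = k then 1 else 0) P p q
     = (\<Sum>i<m. \<Sum>j<m. (if p mod n = k \<and> q mod n = k then (if i = p div n \<and> j = q div n then 1 else 0) else 0) *\<^sub>C P i j)"
    unfolding conj_by_def using assms by (simp, intro sum.cong) (auto simp: cnj_ind)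
  also have "\<dots> = (if p mod n = k \<and> q mod n = k then P (p div n) (q div n) else 0)"
    using a sum_delta2'[where N=m and a="p div n" and b="q div n" and F=P] by (cases "p mod n = k \<and> q mod n = k") auto
  finally show ?thesis .
qed

lemma os_zero: "operator_system X \<Longrightarrow> 0 \<in> carrier X"
  unfolding operator_system_def csubspace_def by (elim conjE) assumption
lemma os_cone_Mat: "operator_system X \<Longrightarrow> A \<in> cone X m \<Longrightarrow> A \<in> Mat m (carrier X)"
proof -
  assume os: "operator_system X" and A: "A \<in> cone X m"
  have "\<forall>n. cone X n \<subseteq> {A \<in> Mat n (carrier X). hermitian (star X) A}"
    using os unfolding operator_system_def by (elim conjE) assumption
  then show ?thesis using A by blast
qed
lemma os_cone_add: "operator_system X \<Longrightarrow> A \<in> cone X m \<Longrightarrow> B \<in> cone X m \<Longrightarrow> A + B \<in> cone X m"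
proof -
  assume os: "operator_system X" and A: "A \<in> cone X m" "B \<in> cone X m"
  have "\<forall>n. \<forall>A\<in>cone X n. \<forall>B\<in>cone X n. A + B \<in> cone X n"
    using os unfolding operator_system_def by (elim conjE) assumption
  then show ?thesis using A by blast
qed
lemma os_cone_conj: "operator_system X \<Longrightarrow> A \<in> cone X n \<Longrightarrow> conj_by n m \<alpha> A \<in> cone X m"
proof -
  assume os: "operator_system X" and A: "A \<in> cone X n"
  have "\<forall>n m \<alpha>. \<forall>A\<in>cone X n. conj_by n m \<alpha> A \<in> cone X m"
    using os unfolding operator_system_def by (elim conjE) assumption
  then show ?thesis using A by blast
qed
lemma os_arch: "operator_system X \<Longrightarrow> A \<in> Mat n (carrier X) \<Longrightarrow> hermitian (star X) A \<Longrightarrow>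
   \<exists>r::real. r > 0 \<and> complex_of_real r *\<^sub>C diag_unit n (unit X) + A \<in> cone X n"
proof -
  assume os: "operator_system X" and A: "A \<in> Mat n (carrier X)" "hermitian (star X) A"
  have "\<forall>n. \<forall>A\<in>Mat n (carrier X). hermitian (star X) A \<longrightarrow>
        (\<exists>r::real. r > 0 \<and> complex_of_real r *\<^sub>C diag_unit n (unit X) + A \<in> cone X n)"
    using os unfolding operator_system_def by (elim conjE) assumption
  then show ?thesis using A by blast
qed
lemma os_cone_scale: "operator_system X \<Longrightarrow> A \<in> cone X n \<Longrightarrow> r \<ge> 0 \<Longrightarrow> complex_of_real r *\<^sub>C A \<in> cone X n"
proof -
  assume os: "operator_system X" and A: "A \<in> cone X n" "r \<ge> 0"
  have "\<forall>n. \<forall>A\<in>cone X n. \<forall>r::real. r \<ge> 0 \<longrightarrow> complex_of_real r *\<^sub>C A \<in> cone X n"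
    using os unfolding operator_system_def by (elim conjE) assumption
  then show ?thesis using A by blast
qed
lemma os_star_add: "operator_system X \<Longrightarrow> x \<in> carrier X \<Longrightarrow> y \<in> carrier X \<Longrightarrow> star X (x + y) = star X x + star X y"
proof -
  assume os: "operator_system X" and A: "x \<in> carrier X" "y \<in> carrier X"
  have "\<forall>x\<in>carrier X. \<forall>y\<in>carrier X. star X (x + y) = star X x + star X y"
    using os unfolding operator_system_def by (elim conjE) assumption
  then show ?thesis using A by blast
qed
lemma os_star_zero: "operator_system X \<Longrightarrow> star X 0 = 0"
proof -
  assume os: "operator_system X"
  have "star X (0 + 0) = star X 0 + star X 0" using os_star_add[OF os os_zero[OF os] os_zero[OF os]] .
  then show ?thesis by simp
qed
lemma Mat_zero: "0 \<in> V \<Longrightarrow> (0::nat\<Rightarrow>nat\<Rightarrow>'a::zero) \<in> Mat m V"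
  by (simp add: Mat_def mat_in_def)
lemma os_cone_zero: "operator_system X \<Longrightarrow> 0 \<in> cone X m"
proof -
  assume os: "operator_system X"
  have h: "hermitian (star X) 0" using os_star_zero[OF os]
    by (simp add: hermitian_def mat_star_def fun_eq_iff)
  have "0 \<in> Mat m (carrier X)" by (rule Mat_zero[OF os_zero[OF os]])
  then obtain r :: real where "complex_of_real r *\<^sub>C diag_unit m (unit X) + 0 \<in> cone X m"
    using os_arch[OF os _ h] by blast
  then have "complex_of_real 0 *\<^sub>C (complex_of_real r *\<^sub>C diag_unit m (unit X) + 0) \<in> cone X m"
    using os_cone_scale[OF os] by blast
  moreover have "complex_of_real 0 *\<^sub>C (complex_of_real r *\<^sub>C diag_unit m (unit X) + 0) = 0"
    by (simp add: fun_eq_iff)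
  ultimately show ?thesis by simp
qed
lemma os_cone_sum: assumes os: "operator_system X"
  shows "finite S \<Longrightarrow> (\<forall>k\<in>S. f k \<in> cone X m) \<Longrightarrow> sum f S \<in> cone X m"
  by (induction S rule: finite_induct) (auto intro: os_cone_zero[OF os] os_cone_add[OF os])

lemma Mat_iff: "A \<in> Mat n V \<longleftrightarrow> (\<forall>i j. (i < n \<and> j < n \<longrightarrow> A i j \<in> V) \<and> (\<not> (i < n \<and> j < n) \<longrightarrow> A i j = 0))"
  by (simp add: Mat_def mat_in_def)

lemma diag_unit_Mat: "0 \<in> V \<Longrightarrow> x \<in> V \<Longrightarrow> diag_unit n x \<in> Mat n V"
  by (auto simp: Mat_iff diag_unit_def)
lemma diag_unit_zero[simp]: "diag_unit n 0 = 0"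
  by (simp add: diag_unit_def fun_eq_iff)

lemma flatten_amp:
  assumes "0 < n"
  shows "flatten n (\<lambda>i j. diag_unit n (P i j)) = (\<lambda>p q. if p mod n = q mod n then P (p div n) (q div n) else 0)"
  using assms by (auto simp: flatten_def diag_unit_def fun_eq_iff)

lemma amp:
  assumes os: "operator_system X" and n: "0 < n" and P: "P \<in> Mat m (carrier X)"
  shows "(\<lambda>i j. diag_unit n (P i j)) \<in> cone (Mn_sys n X) m \<longleftrightarrow> P \<in> cone X m"
proof -
  have M: "(\<lambda>i j. diag_unit n (P i j)) \<in> Mat m (Mat n (carrier X))"
  proof -
    have "\<And>i j. i < m \<and> j < m \<Longrightarrow> P i j \<in> carrier X" "\<And>i j. \<not>(i < m \<and> j < m) \<Longrightarrow> P i j = 0"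
      using P unfolding Mat_iff by blast+
    then show ?thesis unfolding Mat_iff[of "\<lambda>i j. diag_unit n (P i j)"]
      using diag_unit_Mat[OF os_zero[OF os]] by simp
  qed
  define F where "F = (\<lambda>p q. if p mod n = q mod n then P (p div n) (q div n) else (0::'a))"
  have "(\<lambda>i j. diag_unit n (P i j)) \<in> cone (Mn_sys n X) m \<longleftrightarrow> F \<in> cone X (m*n)"
    using M flatten_amp[OF n, of P] by (simp add: Mn_sys_def F_def)
  also have "\<dots> \<longleftrightarrow> P \<in> cone X m"
  proof
    assume F: "F \<in> cone X (m*n)"
    have g: "\<forall>k<m. k * n < m * n" using n by simp
    have "conj_by (m*n) m (\<lambda>p i. if p = i * n then 1 else 0) F \<in> cone X m"
      by (rule os_cone_conj[OF os F])
    moreover have "conj_by (m*n) m (\<lambda>p i. if p = i * n then 1 else 0) F = P"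
      unfolding conj_compress[OF g] using P n by (auto simp: F_def fun_eq_iff Mat_iff)
    ultimately show "P \<in> cone X m" by simp
  next
    assume PC: "P \<in> cone X m"
    define G where "G = (\<lambda>k. conj_by m (m*n) (\<lambda>i p. if i = p div n \<and> p mod n = k then 1 else 0) P)"
    have "sum G {..<n} \<in> cone X (m*n)"
      using os_cone_sum[OF os, of "{..<n}" G] os_cone_conj[OF os PC] by (simp add: G_def)
    moreover have "sum G {..<n} = F"
    proof (intro ext)
      fix p q
      show "sum G {..<n} p q = F p q"
      proof (cases "p < m*n \<and> q < m*n")
        case True
        have "sum G {..<n} p q = (\<Sum>k<n. if k = p mod n then (if p mod n = q mod n then P (p div n) (q div n) else 0) else 0)"
        proof -
          have "sum G {..<n} p q = (\<Sum>k<n. G k p q)" by (simp add: sum_fun_apply)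
          also have "\<dots> = (\<Sum>k<n. if k = p mod n then (if p mod n = q mod n then P (p div n) (q div n) else 0) else 0)"
            using True n by (intro sum.cong refl) (auto simp: G_def conj_amp)
          finally show ?thesis .
        qed
        also have "\<dots> = F p q" using n by (subst sum_delta1) (simp add: F_def)
        finally show ?thesis .
      next
        case False
        have "sum G {..<n} p q = 0"
          by (simp add: sum_fun_apply G_def conj_by_def if_not_P[OF False] del: One_nat_def)
        moreover have "F p q = 0"
        proof -
          have "\<not> (p div n < m \<and> q div n < m)" using False n
            by (metis div_less_iff_less_mult mult.commute)
          then show ?thesis using P by (simp add: F_def Mat_iff)
        qed
        ultimately show ?thesis by simp
      qed
    qed
    ultimately show "F \<in> cone X (m*n)" by simp
  qed
  finally show ?thesis .
qed

lemma os_carrier_add: "operator_system X \<Longrightarrow> x \<in> carrier X \<Longrightarrow> y \<in> carrier X \<Longrightarrow> x + y \<in> carrier X"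
  unfolding operator_system_def csubspace_def by (elim conjE) blast
lemma os_carrier_scale: "operator_system X \<Longrightarrow> x \<in> carrier X \<Longrightarrow> c *\<^sub>C x \<in> carrier X"
  unfolding operator_system_def csubspace_def by (elim conjE) blast
lemma os_unit: "operator_system X \<Longrightarrow> unit X \<in> carrier X"
  unfolding operator_system_def by (elim conjE) assumption
lemma os_star: "operator_system X \<Longrightarrow> x \<in> carrier X \<Longrightarrow> star X x \<in> carrier X"
proof -
  assume os: "operator_system X" and x: "x \<in> carrier X"
  have "\<forall>x\<in>carrier X. star X x \<in> carrier X \<and> star X (star X x) = x"
    using os unfolding operator_system_def by (elim conjE) assumption
  then show ?thesis using x by blast
qed

lemma scale_diag: "c *\<^sub>C diag_unit n (x::'a::cvec) = diag_unit n (c *\<^sub>C x)"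
  by (simp add: diag_unit_def fun_eq_iff)
lemma add_diag: "diag_unit n (x::'a::cvec) + diag_unit n y = diag_unit n (x + y)"
  by (simp add: diag_unit_def fun_eq_iff)
lemma star_diag: "s 0 = 0 \<Longrightarrow> mat_star s (diag_unit n x) = diag_unit n (s x)"
  by (auto simp: diag_unit_def mat_star_def fun_eq_iff)

lemma osnorm_Mn:
  assumes os: "operator_system X" and n: "0 < n" and x: "x \<in> carrier X"
  shows "osnorm (Mn_sys n X) (diag_unit n x) = osnorm X x"
proof -
  define PX where "PX = (\<lambda>r::real. (\<lambda>(i::nat) (j::nat). if i = 0 \<and> j = 0 then complex_of_real r *\<^sub>C unit X
             else if i = 0 \<and> j = 1 then x
             else if i = 1 \<and> j = 0 then star X x
             else if i = 1 \<and> j = 1 then complex_of_real r *\<^sub>C unit X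
             else 0))"
  have PM: "PX r \<in> Mat 2 (carrier X)" for r
    unfolding Mat_iff PX_def
    using os_carrier_scale[OF os os_unit[OF os]] os_star[OF os x] x by auto
  have eq: "(\<lambda>i j. if i = 0 \<and> j = 0 then complex_of_real r *\<^sub>C unit (Mn_sys n X)
             else if i = 0 \<and> j = 1 then diag_unit n x
             else if i = 1 \<and> j = 0 then star (Mn_sys n X) (diag_unit n x)
             else if i = 1 \<and> j = 1 then complex_of_real r *\<^sub>C unit (Mn_sys n X)
             else 0) = (\<lambda>i j. diag_unit n (PX r i j))" for r
    by (simp add: Mn_sys_def star_diag[where s="star X", OF os_star_zero[OF os]] scale_diag PX_def fun_eq_iff)
  show ?thesis
    unfolding osnorm_def eq amp[OF os n PM] by (simp add: PX_def)
qed

definition liftM :: "nat \<Rightarrow> ('a::cvec \<Rightarrow> 'a) \<Rightarrow> (nat \<Rightarrow> nat \<Rightarrow> 'a) \<Rightarrow> (nat \<Rightarrow> nat \<Rightarrow> 'a)" where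
  "liftM n \<phi> B = (\<lambda>p q. if p < n \<and> q < n then \<phi> (B p q) else 0)"
definition compM :: "nat \<Rightarrow> ((nat \<Rightarrow> nat \<Rightarrow> 'a::cvec) \<Rightarrow> (nat \<Rightarrow> nat \<Rightarrow> 'a)) \<Rightarrow> 'a \<Rightarrow> 'a" where
  "compM n \<Phi> x = \<Phi> (diag_unit n x) 0 0"

lemma clin_zero: "clinear_on V f \<Longrightarrow> 0 \<in> V \<Longrightarrow> f 0 = 0"
proof -
  assume "clinear_on V f" "0 \<in> V"
  then have "f (0 + 0) = f 0 + f 0" unfolding clinear_on_def by blast
  then show ?thesis by simp
qed

lemma CP_cong:
  assumes z: "0 \<in> carrier X" and c: "\<forall>m. cone X m \<subseteq> Mat m (carrier X)"
    and ca: "\<forall>x\<in>carrier X. \<forall>y\<in>carrier X. x + y \<in> carrier X"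
    and cs: "\<forall>c. \<forall>x\<in>carrier X. c *\<^sub>C x \<in> carrier X"
    and eq: "\<forall>x\<in>carrier X. f x = g x" and g: "g \<in> CP X"
  shows "f \<in> CP X"
proof -
  have lin: "clinear_on (carrier X) f"
    using g eq ca cs unfolding CP_def clinear_on_def by simp
  have im: "f ` carrier X \<subseteq> carrier X" using g eq unfolding CP_def by auto
  have "(\<lambda>i j. f (A i j)) \<in> cone X m" if A: "A \<in> cone X m" for m A
  proof -
    have "A \<in> Mat m (carrier X)" using c A by blast
    then have "\<forall>i j. A i j \<in> carrier X" using z unfolding Mat_iff by metis
    then have "(\<lambda>i j. f (A i j)) = (\<lambda>i j. g (A i j))" using eq by simp
    then show ?thesis using g A unfolding CP_def by simp
  qed
  then show ?thesis using lin im unfolding CP_def by blast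
qed

lemma Mat_add: "(\<forall>x\<in>V. \<forall>y\<in>V. x + y \<in> V) \<Longrightarrow> A \<in> Mat n V \<Longrightarrow> B \<in> Mat n V \<Longrightarrow> A + (B::nat\<Rightarrow>nat\<Rightarrow>'a::cvec) \<in> Mat n V"
  by (simp add: Mat_iff)
lemma Mat_scale: "(\<forall>c. \<forall>x\<in>V. c *\<^sub>C x \<in> V) \<Longrightarrow> A \<in> Mat n V \<Longrightarrow> c *\<^sub>C (A::nat\<Rightarrow>nat\<Rightarrow>'a::cvec) \<in> Mat n V"
  by (simp add: Mat_iff)

lemma Mn_facts:
  assumes os: "operator_system X"
  shows "0 \<in> carrier (Mn_sys n X)" "\<forall>m. cone (Mn_sys n X) m \<subseteq> Mat m (carrier (Mn_sys n X))"
    "\<forall>x\<in>carrier (Mn_sys n X). \<forall>y\<in>carrier (Mn_sys n X). x + y \<in> carrier (Mn_sys n X)"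
    "\<forall>c. \<forall>x\<in>carrier (Mn_sys n X). c *\<^sub>C x \<in> carrier (Mn_sys n X)"
  using Mat_zero[OF os_zero[OF os]] Mat_add[of "carrier X"] Mat_scale[of "carrier X"]
    os_carrier_add[OF os] os_carrier_scale[OF os]
  by (auto simp: Mn_sys_def)

lemma X_facts:
  assumes os: "operator_system X"
  shows "0 \<in> carrier X" "\<forall>m. cone X m \<subseteq> Mat m (carrier X)"
    "\<forall>x\<in>carrier X. \<forall>y\<in>carrier X. x + y \<in> carrier X"
    "\<forall>c. \<forall>x\<in>carrier X. c *\<^sub>C x \<in> carrier X"
  using os_zero[OF os] os_cone_Mat[OF os] os_carrier_add[OF os] os_carrier_scale[OF os] by auto

lemma liftM_diag: "\<phi> 0 = 0 \<Longrightarrow> liftM n \<phi> (diag_unit n x) = diag_unit n (\<phi> x)"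
  by (auto simp: liftM_def diag_unit_def fun_eq_iff)

lemma liftM_Mat: "(\<forall>x\<in>V. \<phi> x \<in> W) \<Longrightarrow> 0 \<in> W \<Longrightarrow> B \<in> Mat n V \<Longrightarrow> liftM n \<phi> B \<in> Mat n W"
  by (auto simp: Mat_iff liftM_def)

lemma liftM_CP:
  assumes os: "operator_system X" and n: "0 < n" and phi: "\<phi> \<in> CP X"
  shows "liftM n \<phi> \<in> CP (Mn_sys n X)"
proof -
  have lin: "clinear_on (carrier X) \<phi>" and im: "\<forall>x\<in>carrier X. \<phi> x \<in> carrier X"
    and cp: "\<And>m A. A \<in> cone X m \<Longrightarrow> (\<lambda>i j. \<phi> (A i j)) \<in> cone X m"
    using phi unfolding CP_def by auto
  have z: "\<phi> 0 = 0" by (rule clin_zero[OF lin os_zero[OF os]])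
  have l1: "clinear_on (Mat n (carrier X)) (liftM n \<phi>)"
    unfolding clinear_on_def
  proof (intro conjI ballI allI)
    fix B C assume B: "B \<in> Mat n (carrier X)" and C: "C \<in> Mat n (carrier X)"
    show "liftM n \<phi> (B + C) = liftM n \<phi> B + liftM n \<phi> C"
      using B C lin unfolding liftM_def clinear_on_def Mat_iff by (auto simp: fun_eq_iff)
  next
    fix c B assume B: "B \<in> Mat n (carrier X)"
    show "liftM n \<phi> (c *\<^sub>C B) = c *\<^sub>C liftM n \<phi> B"
      using B lin unfolding liftM_def clinear_on_def Mat_iff by (auto simp: fun_eq_iff)
  qed
  have l2: "liftM n \<phi> ` Mat n (carrier X) \<subseteq> Mat n (carrier X)"
    using liftM_Mat[OF im os_zero[OF os]] by blast
  have l3: "(\<lambda>i j. liftM n \<phi> (A i j)) \<in> cone (Mn_sys n X) m" if A: "A \<in> cone (Mn_sys n X) m" for m A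
  proof -
    have AM: "A \<in> Mat m (Mat n (carrier X))" and AF: "flatten n A \<in> cone X (m*n)"
      using A by (auto simp: Mn_sys_def)
    have z2: "liftM n \<phi> 0 = 0" using z by (simp add: liftM_def fun_eq_iff)
    have M: "(\<lambda>i j. liftM n \<phi> (A i j)) \<in> Mat m (Mat n (carrier X))"
    proof -
      have "\<And>i j. i < m \<and> j < m \<Longrightarrow> A i j \<in> Mat n (carrier X)" "\<And>i j. \<not>(i < m \<and> j < m) \<Longrightarrow> A i j = 0"
        using AM unfolding Mat_iff by blast+
      then show ?thesis unfolding Mat_iff[of "\<lambda>i j. liftM n \<phi> (A i j)"]
        using l2 z2 by auto
    qed
    have "flatten n (\<lambda>i j. liftM n \<phi> (A i j)) = (\<lambda>p q. \<phi> (flatten n A p q))"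
      using n by (simp add: flatten_def liftM_def fun_eq_iff)
    then have "flatten n (\<lambda>i j. liftM n \<phi> (A i j)) \<in> cone X (m*n)" using cp[OF AF] by simp
    then show ?thesis using M by (simp add: Mn_sys_def)
  qed
  show ?thesis unfolding CP_def using l1 l2 l3 by (simp add: Mn_sys_def)
qed

lemma compM_CP:
  assumes os: "operator_system X" and n: "0 < n" and Phi: "\<Phi> \<in> CP (Mn_sys n X)"
  shows "compM n \<Phi> \<in> CP X"
proof -
  have lin: "clinear_on (Mat n (carrier X)) \<Phi>" and im: "\<forall>B\<in>Mat n (carrier X). \<Phi> B \<in> Mat n (carrier X)"
    and cp: "\<And>m A. A \<in> cone (Mn_sys n X) m \<Longrightarrow> (\<lambda>i j. \<Phi> (A i j)) \<in> cone (Mn_sys n X) m"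
    using Phi unfolding CP_def by (auto simp: Mn_sys_def)
  have D: "\<And>x. x \<in> carrier X \<Longrightarrow> diag_unit n x \<in> Mat n (carrier X)"
    by (rule diag_unit_Mat[OF os_zero[OF os]])
  have l1: "clinear_on (carrier X) (compM n \<Phi>)"
    unfolding clinear_on_def
  proof (intro conjI ballI allI)
    fix x y assume x: "x \<in> carrier X" and y: "y \<in> carrier X"
    have "\<Phi> (diag_unit n x + diag_unit n y) = \<Phi> (diag_unit n x) + \<Phi> (diag_unit n y)"
      using lin D[OF x] D[OF y] unfolding clinear_on_def by blast
    then show "compM n \<Phi> (x + y) = compM n \<Phi> x + compM n \<Phi> y"
      by (simp add: compM_def add_diag)
  next
    fix c x assume x: "x \<in> carrier X"
    have "\<Phi> (c *\<^sub>C diag_unit n x) = c *\<^sub>C \<Phi> (diag_unit n x)"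
      using lin D[OF x] unfolding clinear_on_def by blast
    then show "compM n \<Phi> (c *\<^sub>C x) = c *\<^sub>C compM n \<Phi> x"
      by (simp add: compM_def scale_diag)
  qed
  have l2: "compM n \<Phi> ` carrier X \<subseteq> carrier X"
  proof
    fix y assume "y \<in> compM n \<Phi> ` carrier X"
    then obtain x where x: "x \<in> carrier X" and y: "y = compM n \<Phi> x" by blast
    have "\<Phi> (diag_unit n x) \<in> Mat n (carrier X)" using im D[OF x] by blast
    then show "y \<in> carrier X" using n y unfolding compM_def Mat_iff by blast
  qed
  have z: "compM n \<Phi> 0 = 0" by (rule clin_zero[OF l1 os_zero[OF os]])
  have l3: "(\<lambda>i j. compM n \<Phi> (A i j)) \<in> cone X m" if A: "A \<in> cone X m" for m A
  proof -
    have AM: "A \<in> Mat m (carrier X)" by (rule os_cone_Mat[OF os A])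
    have "(\<lambda>i j. diag_unit n (A i j)) \<in> cone (Mn_sys n X) m"
      using amp[OF os n AM] A by simp
    then have "(\<lambda>i j. \<Phi> (diag_unit n (A i j))) \<in> cone (Mn_sys n X) m" by (rule cp)
    then have F: "flatten n (\<lambda>i j. \<Phi> (diag_unit n (A i j))) \<in> cone X (m*n)"
      by (simp add: Mn_sys_def)
    have g: "\<forall>k<m. k * n < m * n" using n by simp
    have "conj_by (m*n) m (\<lambda>p i. if p = i * n then 1 else 0) (flatten n (\<lambda>i j. \<Phi> (diag_unit n (A i j)))) \<in> cone X m"
      by (rule os_cone_conj[OF os F])
    moreover have "conj_by (m*n) m (\<lambda>p i. if p = i * n then 1 else 0) (flatten n (\<lambda>i j. \<Phi> (diag_unit n (A i j))))
        = (\<lambda>i j. compM n \<Phi> (A i j))"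
      unfolding conj_compress[OF g] using AM n z by (auto simp: flatten_def compM_def fun_eq_iff Mat_iff)
    ultimately show ?thesis by simp
  qed
  show ?thesis unfolding CP_def using l1 l2 l3 by blast
qed

lemma dir1:
  assumes os: "operator_system X" and sub: "subsystem X0 X" and n: "0 < n"
    and P1: "\<Phi> \<in> CP1 (Mn_sys n X)" and P2: "\<Phi> ` carrier (Mn_sys n X) \<subseteq> carrier (Mn_sys n X0)"
    and P3: "(\<lambda>x. \<Phi> x - x) \<in> CP (Mn_sys n X)"
  shows "\<exists>\<phi>. osnorm (Mn_sys n X) (\<Phi> (unit (Mn_sys n X))) = osnorm X (\<phi> (unit X)) \<and>
     \<phi> \<in> CP1 X \<and> \<phi> ` carrier X \<subseteq> carrier X0 \<and> (\<lambda>x. \<phi> x - x) \<in> CP X"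
proof -
  have PCP: "\<Phi> \<in> CP (Mn_sys n X)" using P1 unfolding CP1_def by blast
  have un: "\<forall>c. \<exists>d. \<Phi> (c *\<^sub>C diag_unit n (unit X)) = d *\<^sub>C diag_unit n (unit X)"
    using P1 unfolding CP1_def by (simp add: Mn_sys_def)
  define \<phi> where "\<phi> = compM n \<Phi>"
  have c1: "\<phi> \<in> CP X" unfolding \<phi>_def by (rule compM_CP[OF os n PCP])
  have cu: "\<exists>d. \<phi> (c *\<^sub>C unit X) = d *\<^sub>C unit X" for c
  proof -
    obtain d where "\<Phi> (c *\<^sub>C diag_unit n (unit X)) = d *\<^sub>C diag_unit n (unit X)" using un by blast
    then have "\<phi> (c *\<^sub>C unit X) = d *\<^sub>C unit X" using n
      by (simp add: \<phi>_def compM_def scale_diag) (simp add: diag_unit_def)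
    then show ?thesis by blast
  qed
  obtain d where d: "\<Phi> (1 *\<^sub>C diag_unit n (unit X)) = d *\<^sub>C diag_unit n (unit X)" using un by blast
  have phiu: "\<phi> (unit X) = d *\<^sub>C unit X" using d n
    by (simp add: \<phi>_def compM_def scale_diag) (simp add: diag_unit_def)
  have Phiu: "\<Phi> (unit (Mn_sys n X)) = diag_unit n (\<phi> (unit X))"
    using d by (simp add: Mn_sys_def phiu scale_diag)
  have uc: "\<phi> (unit X) \<in> carrier X" using phiu os_carrier_scale[OF os os_unit[OF os]] by simp
  have sub0: "0 \<in> carrier X0" "carrier X0 \<subseteq> carrier X"
    using sub unfolding subsystem_def csubspace_def by auto
  have im: "\<phi> ` carrier X \<subseteq> carrier X0"
  proof
    fix y assume "y \<in> \<phi> ` carrier X"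
    then obtain x where x: "x \<in> carrier X" and y: "y = \<phi> x" by blast
    have "\<Phi> (diag_unit n x) \<in> Mat n (carrier X0)"
      using P2 diag_unit_Mat[OF os_zero[OF os] x] by (auto simp: Mn_sys_def)
    then show "y \<in> carrier X0" using n y unfolding \<phi>_def compM_def Mat_iff by blast
  qed
  have c3: "(\<lambda>x. \<phi> x - x) \<in> CP X"
  proof (rule CP_cong[OF X_facts[OF os]])
    show "compM n (\<lambda>x. \<Phi> x - x) \<in> CP X" by (rule compM_CP[OF os n P3])
    show "\<forall>x\<in>carrier X. \<phi> x - x = compM n (\<lambda>x. \<Phi> x - x) x"
      using n by (simp add: \<phi>_def compM_def diag_unit_def)
  qed
  show ?thesis
    using c1 cu im c3 osnorm_Mn[OF os n uc] Phiu unfolding CP1_def by auto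
qed

lemma dir2:
  assumes os: "operator_system X" and sub: "subsystem X0 X" and n: "0 < n"
    and P1: "\<phi> \<in> CP1 X" and P2: "\<phi> ` carrier X \<subseteq> carrier X0"
    and P3: "(\<lambda>x. \<phi> x - x) \<in> CP X"
  shows "\<exists>\<Phi>. osnorm X (\<phi> (unit X)) = osnorm (Mn_sys n X) (\<Phi> (unit (Mn_sys n X))) \<and>
     \<Phi> \<in> CP1 (Mn_sys n X) \<and> \<Phi> ` carrier (Mn_sys n X) \<subseteq> carrier (Mn_sys n X0) \<and>
     (\<lambda>x. \<Phi> x - x) \<in> CP (Mn_sys n X)"
proof -
  have pCP: "\<phi> \<in> CP X" using P1 unfolding CP1_def by blast
  have un: "\<forall>c. \<exists>d. \<phi> (c *\<^sub>C unit X) = d *\<^sub>C unit X"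
    using P1 unfolding CP1_def by simp
  have z: "\<phi> 0 = 0" using pCP os_zero[OF os] clin_zero unfolding CP_def by blast
  define \<Phi> where "\<Phi> = liftM n \<phi>"
  have c1: "\<Phi> \<in> CP (Mn_sys n X)" unfolding \<Phi>_def by (rule liftM_CP[OF os n pCP])
  have cu: "\<exists>d. \<Phi> (c *\<^sub>C unit (Mn_sys n X)) = d *\<^sub>C unit (Mn_sys n X)" for c
  proof -
    obtain d where "\<phi> (c *\<^sub>C unit X) = d *\<^sub>C unit X" using un by blast
    then have "\<Phi> (c *\<^sub>C unit (Mn_sys n X)) = d *\<^sub>C unit (Mn_sys n X)"
      by (simp add: \<Phi>_def Mn_sys_def scale_diag liftM_diag[where \<phi>=\<phi>, OF z])
    then show ?thesis by blast
  qed
  have Phiu: "\<Phi> (unit (Mn_sys n X)) = diag_unit n (\<phi> (unit X))"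
    by (simp add: \<Phi>_def Mn_sys_def liftM_diag[where \<phi>=\<phi>, OF z])
  have uc: "\<phi> (unit X) \<in> carrier X" using pCP os_unit[OF os] unfolding CP_def by blast
  have sub0: "0 \<in> carrier X0" "carrier X0 \<subseteq> carrier X"
    using sub unfolding subsystem_def csubspace_def by auto
  have im: "\<Phi> ` carrier (Mn_sys n X) \<subseteq> carrier (Mn_sys n X0)"
    using liftM_Mat[of "carrier X" \<phi> "carrier X0"] P2 sub0 by (auto simp: \<Phi>_def Mn_sys_def)
  have c3: "(\<lambda>x. \<Phi> x - x) \<in> CP (Mn_sys n X)"
  proof (rule CP_cong[OF Mn_facts[OF os]])
    show "liftM n (\<lambda>x. \<phi> x - x) \<in> CP (Mn_sys n X)" by (rule liftM_CP[OF os n P3])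
    show "\<forall>x\<in>carrier (Mn_sys n X). \<Phi> x - x = liftM n (\<lambda>x. \<phi> x - x) x"
      by (auto simp: \<Phi>_def liftM_def Mn_sys_def Mat_iff fun_eq_iff)
  qed
  have "osnorm X (\<phi> (unit X)) = osnorm (Mn_sys n X) (\<Phi> (unit (Mn_sys n X)))"
    using osnorm_Mn[OF os n uc] Phiu by simp
  moreover have "\<Phi> \<in> CP1 (Mn_sys n X)" using c1 cu unfolding CP1_def by blast
  ultimately show ?thesis using im c3 by blast
qed

theorem corollary3p11:
  fixes X X0 :: "'a::cvec opsys" and n :: nat
  assumes "fd_operator_system X"
    and "subsystem X0 X"
    and "n \<ge> 1"
  shows "Ind_CP (Mn_sys n X) (Mn_sys n X0) = Ind_CP X X0"
proof -
  have os: "operator_system X" using assms(1) by (simp add: fd_operator_system_def)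
  have n: "0 < n" using assms(3) by simp
  have "{ereal (osnorm (Mn_sys n X) (\<Phi> (unit (Mn_sys n X)))) | \<Phi>.
      \<Phi> \<in> CP1 (Mn_sys n X) \<and> \<Phi> ` carrier (Mn_sys n X) \<subseteq> carrier (Mn_sys n X0) \<and> (\<lambda>x. \<Phi> x - x) \<in> CP (Mn_sys n X)}
    = {ereal (osnorm X (\<phi> (unit X))) | \<phi>.
      \<phi> \<in> CP1 X \<and> \<phi> ` carrier X \<subseteq> carrier X0 \<and> (\<lambda>x. \<phi> x - x) \<in> CP X}"
  proof (intro equalityI subsetI)
    fix y assume "y \<in> {ereal (osnorm (Mn_sys n X) (\<Phi> (unit (Mn_sys n X)))) | \<Phi>.
      \<Phi> \<in> CP1 (Mn_sys n X) \<and> \<Phi> ` carrier (Mn_sys n X) \<subseteq> carrier (Mn_sys n X0) \<and> (\<lambda>x. \<Phi> x - x) \<in> CP (Mn_sys n X)}"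
    then obtain \<Phi> where y: "y = ereal (osnorm (Mn_sys n X) (\<Phi> (unit (Mn_sys n X))))"
      and P: "\<Phi> \<in> CP1 (Mn_sys n X)" "\<Phi> ` carrier (Mn_sys n X) \<subseteq> carrier (Mn_sys n X0)" "(\<lambda>x. \<Phi> x - x) \<in> CP (Mn_sys n X)"
      by blast
    show "y \<in> {ereal (osnorm X (\<phi> (unit X))) | \<phi>.
      \<phi> \<in> CP1 X \<and> \<phi> ` carrier X \<subseteq> carrier X0 \<and> (\<lambda>x. \<phi> x - x) \<in> CP X}"
      using dir1[OF os assms(2) n P] y by auto
  next
    fix y assume "y \<in> {ereal (osnorm X (\<phi> (unit X))) | \<phi>.
      \<phi> \<in> CP1 X \<and> \<phi> ` carrier X \<subseteq> carrier X0 \<and> (\<lambda>x. \<phi> x - x) \<in> CP X}"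
    then obtain \<phi> where y: "y = ereal (osnorm X (\<phi> (unit X)))"
      and P: "\<phi> \<in> CP1 X" "\<phi> ` carrier X \<subseteq> carrier X0" "(\<lambda>x. \<phi> x - x) \<in> CP X"
      by blast
    show "y \<in> {ereal (osnorm (Mn_sys n X) (\<Phi> (unit (Mn_sys n X)))) | \<Phi>.
      \<Phi> \<in> CP1 (Mn_sys n X) \<and> \<Phi> ` carrier (Mn_sys n X) \<subseteq> carrier (Mn_sys n X0) \<and> (\<lambda>x. \<Phi> x - x) \<in> CP (Mn_sys n X)}"
      using dir2[OF os assms(2) n P] y by auto
  qed
  then show ?thesis unfolding Ind_CP_def by simp
qed

end
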